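(* Let $\mathbb{X}=(X_n)_{n\ge0}$ be uniformly dominated by $\nu$ at rate $\epsilon(\delta)$, and let $(\mathcal{F}_n)_n$ be its natural filtration. Let $(A_n)_n$ be an $(\mathcal{F}_n)$-predictable sequence of measurable sets (i.e. $A_n$ is determined by $\mathcal{F}_{n-1}$) with $\limsup_{n\to\infty}\nu(A_n)<\delta$ almost surely. Then \[\limsup_{N\to\infty}\frac1N\sum_{n=1}^N\mathbb{1}\{X_n\in A_n\}\le\epsilon(\delta)\quad\text{almost surely.}\]
   Context: $(\mathcal{X},\rho,\nu)$ is a metric measure space with $\rho$ separable and $\nu$ a finite Borel measure. $\mathbb{X}_{<n}=\{X_0,\dots,X_{n-1}\}$. $\mathbb{X}$ is uniformly dominated by $\nu$ if for every $\epsilon>0$ there is $\delta>0$ such that every measurable $A$ with $\nu(A)<\delta$ satisfies $\sup_n\Pr(X_n\in A\mid\mathbb{X}_{<n})<\epsilon$ a.s.; it is uniformly dominated at rate $\epsilon(\cdot)$ if in addition, for every $\delta>0$ and measurable $A$ with $\nu(A)<\delta$, $\sup_n\Pr(X_n\in A\mid\mathbb{X}_{<n})<\epsilon(\delta)$ a.s. *)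

theory Defs
  imports "HOL-Probability.Probability"
begin

text \<open>The paper's natural filtration
  is F_n = nat_past M X (Suc n), so "F_{n-1}-measurable" is "nat_past M X n-measurable".\<close>
definition nat_past :: "'b measure \<Rightarrow> (nat \<Rightarrow> 'b \<Rightarrow> 'a::topological_space) \<Rightarrow> nat \<Rightarrow> 'b measure" where
  "nat_past M X n = sigma (space M) {X i -` B \<inter> space M | i B. i < n \<and> B \<in> sets borel}"

definition cond_prob :: "'b measure \<Rightarrow> (nat \<Rightarrow> 'b \<Rightarrow> 'a::topological_space) \<Rightarrow> nat \<Rightarrow> 'a set \<Rightarrow> 'b \<Rightarrow> real" where
  "cond_prob M X n A = real_cond_exp M (nat_past M X n) (\<lambda>\<omega>. indicator A (X n \<omega>))"

definition unif_dom :: "'b measure \<Rightarrow> (nat \<Rightarrow> 'b \<Rightarrow> 'a::topological_space) \<Rightarrow> 'a measure \<Rightarrow> bool" where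
  "unif_dom M X \<nu> \<longleftrightarrow> (\<forall>e>0. \<exists>d>0. \<forall>A\<in>sets \<nu>. measure \<nu> A < d \<longrightarrow>
      (AE \<omega> in M. (\<Squnion>n. cond_prob M X n A \<omega>) < e))"

definition unif_dom_rate :: "'b measure \<Rightarrow> (nat \<Rightarrow> 'b \<Rightarrow> 'a::topological_space) \<Rightarrow> 'a measure \<Rightarrow> (real \<Rightarrow> real) \<Rightarrow> bool" where
  "unif_dom_rate M X \<nu> \<epsilon> \<longleftrightarrow> unif_dom M X \<nu> \<and> (\<forall>d>0. \<forall>A\<in>sets \<nu>. measure \<nu> A < d \<longrightarrow>
      (AE \<omega> in M. (\<Squnion>n. cond_prob M X n A \<omega>) < \<epsilon> d))"

end

theory Submission
  imports Defs "HOL-Library.Discrete_Functions"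
begin

definition sdiff :: "'x set \<Rightarrow> 'x set \<Rightarrow> 'x set" where
  "sdiff X Y = (X - Y) \<union> (Y - X)"

lemma (in finite_measure) union_bound:
  assumes A: "range A \<subseteq> sets M" and R: "\<And>i. R i \<in> sets M"
    and e: "\<And>i. measure M (sdiff (A i) (R i)) < e"
    and m: "measure M (\<Union>i. A i) - measure M (\<Union>i<m. A i) < \<tau>/2"
    and ed: "e = \<tau>/(2*(real m+1))" and tau: "\<tau> > 0"
  shows "measure M (sdiff (\<Union>i. A i) (\<Union>i<m. R i)) < \<tau>"
proof -
  have sub: "sdiff (\<Union>i. A i) (\<Union>i<m. R i) \<subseteq> ((\<Union>i. A i) - (\<Union>i<m. A i)) \<union> (\<Union>i<m. sdiff (A i) (R i))"
    unfolding sdiff_def by auto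
  have meas: "(\<lambda>i. sdiff (A i) (R i)) ` {..<m} \<subseteq> sets M" using A R unfolding sdiff_def by auto
  have s1: "(\<Union>i. A i) \<in> sets M" "(\<Union>i<m. A i) \<in> sets M" using A by auto
  have "measure M (sdiff (\<Union>i. A i) (\<Union>i<m. R i)) \<le> measure M (((\<Union>i. A i) - (\<Union>i<m. A i)) \<union> (\<Union>i<m. sdiff (A i) (R i)))"
    using sub meas s1 by (intro finite_measure_mono) auto
  also have "\<dots> \<le> measure M ((\<Union>i. A i) - (\<Union>i<m. A i)) + measure M (\<Union>i<m. sdiff (A i) (R i))"
    using meas s1 by (intro measure_subadditive) (auto simp: emeasure_eq_measure)
  also have "measure M ((\<Union>i. A i) - (\<Union>i<m. A i)) = measure M (\<Union>i. A i) - measure M (\<Union>i<m. A i)"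
    using s1 by (intro finite_measure_Diff) auto
  also have "measure M (\<Union>i<m. sdiff (A i) (R i)) \<le> (\<Sum>i<m. measure M (sdiff (A i) (R i)))"
    using meas by (intro finite_measure_subadditive_finite) auto
  also have "\<dots> \<le> (\<Sum>i<m. e)" using e by (intro sum_mono) (auto intro: less_imp_le)
  also have "\<dots> = real m * e" by simp
  also have "real m * e < \<tau>/2" using tau unfolding ed by (simp add: field_simps)
  finally show ?thesis using m by linarith
qed

lemma approx_sigma:
  fixes N1 N2 :: "'x measure"
  assumes f1: "finite_measure N1" and f2: "finite_measure N2"
    and s1: "sets N1 = sigma_sets \<Omega> G" and s2: "sets N2 = sigma_sets \<Omega> G" and GP: "G \<subseteq> Pow \<Omega>"
    and GS: "G \<subseteq> SS" and E: "{} \<in> SS" and C: "\<And>R. R \<in> SS \<Longrightarrow> \<Omega> - R \<in> SS"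
    and U: "\<And>R R'. R \<in> SS \<Longrightarrow> R' \<in> SS \<Longrightarrow> R \<union> R' \<in> SS" and SSs: "SS \<subseteq> sigma_sets \<Omega> G"
    and S: "S \<in> sigma_sets \<Omega> G"
  shows "\<forall>\<tau>>0. \<exists>R\<in>SS. measure N1 (sdiff S R) < \<tau> \<and> measure N2 (sdiff S R) < \<tau>"
  using S
proof (induction rule: sigma_sets.induct)
  case (Basic a)
  then show ?case using GS by (auto intro!: bexI[of _ a] simp: sdiff_def)
next
  case Empty
  then show ?case using E by (auto intro!: bexI[of _ "{}"] simp: sdiff_def)
next
  case (Compl a)
  show ?case
  proof (intro allI impI)
    fix \<tau> :: real assume "\<tau> > 0"
    then obtain R where R: "R \<in> SS" "measure N1 (sdiff a R) < \<tau>" "measure N2 (sdiff a R) < \<tau>"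
      using Compl.IH by blast
    have "a \<subseteq> \<Omega>" using sigma_sets_into_sp[OF GP Compl.hyps] .
    moreover have "R \<subseteq> \<Omega>" using sigma_sets_into_sp[OF GP] SSs R(1) by blast
    ultimately have "sdiff (\<Omega> - a) (\<Omega> - R) = sdiff a R" unfolding sdiff_def by blast
    then show "\<exists>R\<in>SS. measure N1 (sdiff (\<Omega> - a) R) < \<tau> \<and> measure N2 (sdiff (\<Omega> - a) R) < \<tau>"
      using R C by (intro bexI[of _ "\<Omega> - R"]) auto
  qed
next
  case (Union A)
  show ?case
  proof (intro allI impI)
    fix \<tau> :: real assume tau: "\<tau> > 0"
    interpret N1: finite_measure N1 by fact
    interpret N2: finite_measure N2 by fact
    have rA1: "range A \<subseteq> sets N1" and rA2: "range A \<subseteq> sets N2" using Union.hyps s1 s2 by auto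
    have inc: "incseq (\<lambda>m. \<Union>i<m. A i)" by (auto simp: incseq_def intro: less_le_trans)
    have UU: "(\<Union>m. \<Union>i<m. A i) = (\<Union>i. A i)" by blast
    have r1: "range (\<lambda>m. \<Union>i<m. A i) \<subseteq> sets N1" using rA1 by auto
    have r2: "range (\<lambda>m. \<Union>i<m. A i) \<subseteq> sets N2" using rA2 by auto
    have l1: "(\<lambda>m. measure N1 (\<Union>i<m. A i)) \<longlonglongrightarrow> measure N1 (\<Union>i. A i)"
      using N1.finite_Lim_measure_incseq[OF r1 inc] unfolding UU .
    have l2: "(\<lambda>m. measure N2 (\<Union>i<m. A i)) \<longlonglongrightarrow> measure N2 (\<Union>i. A i)"
      using N2.finite_Lim_measure_incseq[OF r2 inc] unfolding UU .
    have "eventually (\<lambda>m. measure N1 (\<Union>i<m. A i) > measure N1 (\<Union>i. A i) - \<tau>/2) sequentially"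
      using order_tendstoD(1)[OF l1] tau by simp
    moreover have "eventually (\<lambda>m. measure N2 (\<Union>i<m. A i) > measure N2 (\<Union>i. A i) - \<tau>/2) sequentially"
      using order_tendstoD(1)[OF l2] tau by simp
    ultimately obtain m where m1: "measure N1 (\<Union>i. A i) - measure N1 (\<Union>i<m. A i) < \<tau>/2"
        and m2: "measure N2 (\<Union>i. A i) - measure N2 (\<Union>i<m. A i) < \<tau>/2"
      using eventually_sequentially by (metis (no_types, lifting) diff_less_eq add.commute eventually_conj_iff le_refl less_diff_eq)
    define e where "e = \<tau>/(2*(real m+1))"
    have e0: "e > 0" using tau by (simp add: e_def)
    have "\<forall>i. \<exists>R. R \<in> SS \<and> measure N1 (sdiff (A i) R) < e \<and> measure N2 (sdiff (A i) R) < e"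
      using Union.IH e0 by blast
    then obtain R where R: "\<And>i. R i \<in> SS" "\<And>i. measure N1 (sdiff (A i) (R i)) < e" "\<And>i. measure N2 (sdiff (A i) (R i)) < e"
      by metis
    have RU: "(\<Union>i<k. R i) \<in> SS" for k
      by (induction k) (auto simp: lessThan_Suc R(1) E intro!: U)
    have R1: "R i \<in> sets N1" and R2: "R i \<in> sets N2" for i using R(1) SSs s1 s2 by auto
    show "\<exists>R'\<in>SS. measure N1 (sdiff (\<Union>i. A i) R') < \<tau> \<and> measure N2 (sdiff (\<Union>i. A i) R') < \<tau>"
      using N1.union_bound[OF rA1 R1 R(2) m1 e_def tau] N2.union_bound[OF rA2 R2 R(3) m2 e_def tau] RU
      by blast
  qed
qed

definition ssec :: "'b measure \<Rightarrow> ('b \<Rightarrow> 'a::topological_space set) \<Rightarrow> bool" where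
  "ssec F S \<longleftrightarrow> finite (S ` space F) \<and> (\<forall>\<omega>\<in>space F. S \<omega> \<in> sets borel) \<and> (\<forall>D. {\<omega>\<in>space F. S \<omega> = D} \<in> sets F)"

definition gr :: "'b measure \<Rightarrow> ('b \<Rightarrow> 'a set) \<Rightarrow> ('b \<times> 'a) set" where
  "gr F S = {(\<omega>,x). \<omega> \<in> space F \<and> x \<in> S \<omega>}"

lemma ssec_comb:
  fixes S1 S2 :: "'b \<Rightarrow> 'a::topological_space set"
  assumes s1: "ssec F S1" and s2: "ssec F S2"
    and g: "\<And>A B. A \<in> sets borel \<Longrightarrow> B \<in> sets borel \<Longrightarrow> g A B \<in> sets (borel :: 'a measure)"
  shows "ssec F (\<lambda>\<omega>. g (S1 \<omega>) (S2 \<omega>))"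
proof -
  let ?O = "space F"
  have f1: "finite (S1 ` ?O)" and f2: "finite (S2 ` ?O)" using s1 s2 unfolding ssec_def by auto
  have "(\<lambda>\<omega>. g (S1 \<omega>) (S2 \<omega>)) ` ?O \<subseteq> (\<lambda>p. g (fst p) (snd p)) ` (S1 ` ?O \<times> S2 ` ?O)"
    by (auto intro!: image_eqI[where x="(S1 _, S2 _)"])
  then have fin: "finite ((\<lambda>\<omega>. g (S1 \<omega>) (S2 \<omega>)) ` ?O)"
    using f1 f2 by (meson finite_SigmaI finite_imageI finite_subset)
  have bor: "\<forall>\<omega>\<in>?O. g (S1 \<omega>) (S2 \<omega>) \<in> sets borel" using s1 s2 g unfolding ssec_def by auto
  have lev: "{\<omega>\<in>?O. g (S1 \<omega>) (S2 \<omega>) = D} \<in> sets F" for D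
  proof -
    have eq: "{\<omega>\<in>?O. g (S1 \<omega>) (S2 \<omega>) = D} = (\<Union>p\<in>{p\<in>S1 ` ?O \<times> S2 ` ?O. g (fst p) (snd p) = D}. {\<omega>\<in>?O. S1 \<omega> = fst p} \<inter> {\<omega>\<in>?O. S2 \<omega> = snd p})"
      by fastforce
    have "finite {p\<in>S1 ` ?O \<times> S2 ` ?O. g (fst p) (snd p) = D}" using f1 f2 by auto
    moreover have "{\<omega>\<in>?O. S1 \<omega> = fst p} \<inter> {\<omega>\<in>?O. S2 \<omega> = snd p} \<in> sets F" for p
      using s1 s2 unfolding ssec_def by auto
    ultimately show ?thesis unfolding eq by (intro sets.finite_UN) auto
  qed
  show ?thesis unfolding ssec_def using fin bor lev by auto
qed

lemma ssec_const_if: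
  assumes a: "a \<in> sets F" and b: "b \<in> sets (borel :: 'a::topological_space measure)"
  shows "ssec F (\<lambda>\<omega>. if \<omega> \<in> a then b else {})"
proof -
  let ?O = "space F"
  have aO: "a \<subseteq> ?O" using a sets.sets_into_space by auto
  have "(\<lambda>\<omega>. if \<omega> \<in> a then b else {}) ` ?O \<subseteq> {b, {}}" by auto
  then have fin: "finite ((\<lambda>\<omega>. if \<omega> \<in> a then b else {}) ` ?O)" by (rule finite_subset) auto
  have lev: "{\<omega>\<in>?O. (if \<omega> \<in> a then b else {}) = D} \<in> sets F" for D
  proof -
    have eq: "{\<omega>\<in>?O. (if \<omega> \<in> a then b else {}) = D} = (if b = D then a else {}) \<union> (if {} = D then ?O - a else {})"
      using aO by auto
    show ?thesis unfolding eq using a by auto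
  qed
  show ?thesis unfolding ssec_def using fin lev b by auto
qed

lemma ssec_gr_sets:
  fixes S :: "'b \<Rightarrow> 'a::topological_space set"
  assumes "ssec F S"
  shows "gr F S \<in> sets (F \<Otimes>\<^sub>M (borel :: 'a measure))"
proof -
  have eq: "gr F S = (\<Union>D\<in>S ` space F. {\<omega>\<in>space F. S \<omega> = D} \<times> D)" unfolding gr_def by auto
  show ?thesis unfolding eq using assms unfolding ssec_def
    by (intro sets.finite_UN) (auto intro!: pair_measureI)
qed

lemma approx_graph:
  fixes N1 N2 :: "('b \<times> 'a::topological_space) measure" and F :: "'b measure"
  assumes f1: "finite_measure N1" and f2: "finite_measure N2"
    and s1: "sets N1 = sets (F \<Otimes>\<^sub>M (borel :: 'a measure))" and s2: "sets N2 = sets (F \<Otimes>\<^sub>M (borel :: 'a measure))"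
    and Q: "Q \<in> sets (F \<Otimes>\<^sub>M (borel :: 'a measure))" and tau: "\<tau> > 0"
  shows "\<exists>S. ssec F S \<and> measure N1 (sdiff Q (gr F S)) < \<tau> \<and> measure N2 (sdiff Q (gr F S)) < \<tau>"
proof -
  let ?O = "space F \<times> (UNIV :: 'a set)"
  let ?G = "{a \<times> b | a b. a \<in> sets F \<and> b \<in> sets (borel :: 'a measure)}"
  let ?SS = "gr F ` {S :: 'b \<Rightarrow> 'a set. ssec F S}"
  have sp: "sets (F \<Otimes>\<^sub>M (borel :: 'a measure)) = sigma_sets ?O ?G"
    using sets_pair_measure[of F "borel :: 'a measure"] by simp
  have GP: "?G \<subseteq> Pow ?O" using sets.sets_into_space by fastforce
  have GS: "?G \<subseteq> ?SS"
  proof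
    fix x assume "x \<in> ?G"
    then obtain a b where x: "x = a \<times> b" "a \<in> sets F" "b \<in> sets (borel :: 'a measure)" by blast
    have "a \<subseteq> space F" using x(2) sets.sets_into_space by auto
    then have "x = gr F (\<lambda>\<omega>. if \<omega> \<in> a then b else {})" unfolding gr_def x(1) by (auto split: if_splits)
    then show "x \<in> ?SS" using ssec_const_if[OF x(2) x(3)] by blast
  qed
  have E: "{} \<in> ?SS"
  proof -
    have e1: "{} = gr F (\<lambda>\<omega>. {} :: 'a set)" unfolding gr_def by auto
    have "ssec F (\<lambda>\<omega>. if \<omega> \<in> {} then ({}::'a set) else {})" by (rule ssec_const_if) auto
    then have e2: "ssec F (\<lambda>\<omega>. {} :: 'a set)" by simp
    show ?thesis using e1 e2 by (intro image_eqI[of _ _ "\<lambda>\<omega>. {} :: 'a set"]) auto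
  qed
  have C: "?O - R \<in> ?SS" if "R \<in> ?SS" for R
  proof -
    obtain S where S: "R = gr F S" "ssec F S" using \<open>R \<in> ?SS\<close> by blast
    have "?O - R = gr F (\<lambda>\<omega>. (\<lambda>A B. UNIV - A) (S \<omega>) (S \<omega>))" unfolding S gr_def by auto
    moreover have "ssec F (\<lambda>\<omega>. (\<lambda>A B. UNIV - A) (S \<omega>) (S \<omega>))"
      by (rule ssec_comb[OF S(2) S(2)]) auto
    ultimately show ?thesis by blast
  qed
  have U: "R \<union> R' \<in> ?SS" if "R \<in> ?SS" "R' \<in> ?SS" for R R'
  proof -
    obtain S where S: "R = gr F S" "ssec F S" using \<open>R \<in> ?SS\<close> by blast
    obtain S' where S': "R' = gr F S'" "ssec F S'" using \<open>R' \<in> ?SS\<close> by blast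
    have "R \<union> R' = gr F (\<lambda>\<omega>. (\<lambda>A B. A \<union> B) (S \<omega>) (S' \<omega>))" unfolding S S' gr_def by auto
    moreover have "ssec F (\<lambda>\<omega>. (\<lambda>A B. A \<union> B) (S \<omega>) (S' \<omega>))"
      by (rule ssec_comb[OF S(2) S'(2)]) auto
    ultimately show ?thesis by blast
  qed
  have SSs: "?SS \<subseteq> sigma_sets ?O ?G" using ssec_gr_sets sp by blast
  have "\<forall>\<tau>>0. \<exists>R\<in>?SS. measure N1 (sdiff Q R) < \<tau> \<and> measure N2 (sdiff Q R) < \<tau>"
    by (rule approx_sigma[OF f1 f2 _ _ GP GS E C U SSs]) (use s1 s2 sp Q in auto)
  then show ?thesis using tau by blast
qed

lemma (in finite_measure) fm_subadd:
  "A \<in> sets M \<Longrightarrow> B \<in> sets M \<Longrightarrow> measure M (A \<union> B) \<le> measure M A + measure M B"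
  by (intro measure_subadditive) (auto simp: emeasure_eq_measure)

lemma key:
  fixes M F :: "'b measure" and Xn :: "'b \<Rightarrow> 'a::{metric_space,second_countable_topology}"
    and \<nu> :: "'a measure" and Q :: "('b \<times> 'a) set"
  assumes P: "prob_space M" and sub: "subalgebra M F" and Xm: "Xn \<in> borel_measurable M"
    and fnu: "finite_measure \<nu>" and snu: "sets \<nu> = sets borel" and c0: "c \<ge> 0"
    and hyp: "\<And>B. B \<in> sets borel \<Longrightarrow> measure \<nu> B < d \<Longrightarrow>
        AE \<omega> in M. real_cond_exp M F (\<lambda>\<omega>. indicator B (Xn \<omega>)) \<omega> < c"
    and Q: "Q \<in> sets (F \<Otimes>\<^sub>M borel)"
    and Qs: "\<And>\<omega>. \<omega> \<in> space M \<Longrightarrow> measure \<nu> (Pair \<omega> -` Q) < d"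
  shows "AE \<omega> in M. real_cond_exp M F (\<lambda>\<omega>. indicator Q (\<omega>, Xn \<omega>)) \<omega> \<le> c"
proof -
  interpret prob_space M by fact
  interpret finite_measure_subalgebra M F
    by (intro finite_measure_subalgebra.intro finite_measure_subalgebra_axioms.intro finite_measure_axioms sub)
  interpret nu: finite_measure \<nu> by fact
  have sF: "sets F \<subseteq> sets M" and spF: "space F = space M" using sub unfolding subalgebra_def by auto
  have [measurable]: "Xn \<in> borel_measurable M" by fact
  have idm: "(\<lambda>\<omega>. \<omega>) \<in> measurable M F"
    unfolding measurable_def using sF spF sets.sets_into_space by (auto simp: Int_absorb2)
  have FM: "A \<in> sets F \<Longrightarrow> A \<in> sets M" for A using sF by auto
  have FMm: "f \<in> borel_measurable F \<Longrightarrow> f \<in> borel_measurable M" for f :: "'b \<Rightarrow> real"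
    using measurable_from_subalg[OF sub] by blast

  have step1: "measure M (H \<inter> {\<omega>\<in>space M. Xn \<omega> \<in> B}) \<le> c * measure M H"
    if H: "H \<in> sets F" and B: "B \<in> sets borel" and nB: "measure \<nu> B < d" for H B
  proof -
    let ?f = "\<lambda>\<omega>. indicator B (Xn \<omega>) :: real"
    have fm: "?f \<in> borel_measurable M"
      using measurable_compose[OF Xm borel_measurable_indicator[OF B]] by simp
    have HM: "H \<in> sets M" using H FM by auto
    have Hm: "indicator H \<in> borel_measurable F" using H by simp
    have HMm: "(indicator H :: 'b \<Rightarrow> real) \<in> borel_measurable M" using HM by simp
    have int: "integrable M (\<lambda>\<omega>. indicator H \<omega> * ?f \<omega>)"
      by (rule integrable_const_bound[where B=1]) (use borel_measurable_times[OF HMm fm] in \<open>auto simp: indicator_def\<close>)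
    have eq: "(\<integral>\<omega>. indicator H \<omega> * real_cond_exp M F ?f \<omega> \<partial>M) = (\<integral>\<omega>. indicator H \<omega> * ?f \<omega> \<partial>M)"
      by (rule real_cond_exp_intg(2)[OF int Hm fm])
    have i1: "integrable M (\<lambda>\<omega>. indicator H \<omega> * real_cond_exp M F ?f \<omega>)"
      by (rule real_cond_exp_intg(1)[OF int Hm fm])
    have "(\<integral>\<omega>. indicator H \<omega> * ?f \<omega> \<partial>M) = (\<integral>\<omega>. indicator (H \<inter> {\<omega>\<in>space M. Xn \<omega> \<in> B}) \<omega> \<partial>M)"
      by (rule Bochner_Integration.integral_cong) (auto simp: indicator_def)
    also have "\<dots> = measure M (H \<inter> {\<omega>\<in>space M. Xn \<omega> \<in> B})"
      proof -
        have "H \<inter> {\<omega>\<in>space M. Xn \<omega> \<in> B} \<inter> space M = H \<inter> {\<omega>\<in>space M. Xn \<omega> \<in> B}" by auto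
        then show ?thesis by simp
      qed
    finally have e1: "(\<integral>\<omega>. indicator H \<omega> * ?f \<omega> \<partial>M) = measure M (H \<inter> {\<omega>\<in>space M. Xn \<omega> \<in> B})" .
    have i2: "integrable M (\<lambda>\<omega>. indicator H \<omega> * c)"
      by (rule integrable_const_bound[where B="\<bar>c\<bar>"]) (use borel_measurable_times[OF HMm borel_measurable_const] in \<open>auto simp: indicator_def\<close>)
    have "(\<integral>\<omega>. indicator H \<omega> * real_cond_exp M F ?f \<omega> \<partial>M) \<le> (\<integral>\<omega>. indicator H \<omega> * c \<partial>M)"
      by (rule integral_mono_AE[OF i1 i2]) (use hyp[OF B nB] in \<open>eventually_elim, auto simp: indicator_def\<close>)
    also have "(\<integral>\<omega>. indicator H \<omega> * c \<partial>M) = c * measure M H"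
      using HM sets.sets_into_space[OF HM] by (simp add: Int_absorb2 mult.commute)
    finally show ?thesis using eq e1 by simp
  qed

  have step2: "measure M (H \<inter> {\<omega>\<in>space M. Xn \<omega> \<in> S \<omega>})
      \<le> c * measure M H + measure M (H \<inter> {\<omega>\<in>space M. d \<le> measure \<nu> (S \<omega>)})"
    if H: "H \<in> sets F" and S: "ssec F S" for H S
  proof -
    define r where "r = S ` space M"
    define L where "L D = {\<omega>\<in>space M. S \<omega> = D}" for D
    define Bd where "Bd = {\<omega>\<in>space M. d \<le> measure \<nu> (S \<omega>)}"
    have fin: "finite r" and LF: "\<And>D. L D \<in> sets F" and rB: "\<And>D. D \<in> r \<Longrightarrow> D \<in> sets borel"
      using S spF unfolding ssec_def r_def L_def by auto
    have LM: "L D \<in> sets M" for D using LF FM by auto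
    have HM: "H \<in> sets M" using H FM by auto
    have Hsp: "H \<subseteq> space M" using sets.sets_into_space[OF HM] .
    have Bd_eq: "Bd = (\<Union>D\<in>{D\<in>r. d \<le> measure \<nu> D}. L D)" unfolding Bd_def L_def r_def by auto
    have BdM: "Bd \<in> sets M" unfolding Bd_eq using fin LM by (intro sets.finite_UN) auto
    have XD: "{\<omega>\<in>space M. Xn \<omega> \<in> D} \<in> sets M" if "D \<in> r" for D
      using measurable_sets[OF Xm rB[OF that]] by (simp add: vimage_def Int_def conj_commute)
    have e1: "H \<inter> {\<omega>\<in>space M. Xn \<omega> \<in> S \<omega>} = (\<Union>D\<in>r. H \<inter> L D \<inter> {\<omega>\<in>space M. Xn \<omega> \<in> D})"
      using Hsp unfolding r_def L_def by auto
    have e2: "H = (\<Union>D\<in>r. H \<inter> L D)" using Hsp unfolding r_def L_def by auto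
    have e3: "H \<inter> Bd = (\<Union>D\<in>r. H \<inter> Bd \<inter> L D)" using Hsp unfolding r_def L_def Bd_def by auto
    have m1: "measure M (H \<inter> {\<omega>\<in>space M. Xn \<omega> \<in> S \<omega>}) = (\<Sum>D\<in>r. measure M (H \<inter> L D \<inter> {\<omega>\<in>space M. Xn \<omega> \<in> D}))"
      unfolding e1 using fin HM LM XD
      by (intro finite_measure_finite_Union) (auto simp: disjoint_family_on_def L_def)
    have m2: "measure M H = (\<Sum>D\<in>r. measure M (H \<inter> L D))"
      using fin HM LM by (subst e2, intro finite_measure_finite_Union) (auto simp: disjoint_family_on_def L_def)
    have m3: "measure M (H \<inter> Bd) = (\<Sum>D\<in>r. measure M (H \<inter> Bd \<inter> L D))"
      using fin HM LM BdM by (subst e3, intro finite_measure_finite_Union) (auto simp: disjoint_family_on_def L_def)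
    have each: "measure M (H \<inter> L D \<inter> {\<omega>\<in>space M. Xn \<omega> \<in> D}) \<le> c * measure M (H \<inter> L D) + measure M (H \<inter> Bd \<inter> L D)"
      if D: "D \<in> r" for D
    proof (cases "measure \<nu> D < d")
      case True
      have "measure M (H \<inter> L D \<inter> {\<omega>\<in>space M. Xn \<omega> \<in> D}) \<le> c * measure M (H \<inter> L D)"
        using step1[OF _ rB[OF D] True] H LF by auto
      then show ?thesis using measure_nonneg[of M "H \<inter> Bd \<inter> L D"] by linarith
    next
      case False
      then have "H \<inter> L D \<subseteq> Bd" unfolding L_def Bd_def by auto
      then have eq: "H \<inter> Bd \<inter> L D = H \<inter> L D" by auto
      have "measure M (H \<inter> L D \<inter> {\<omega>\<in>space M. Xn \<omega> \<in> D}) \<le> measure M (H \<inter> L D)"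
        using HM LM by (intro finite_measure_mono) auto
      then show ?thesis unfolding eq using c0 measure_nonneg[of M "H \<inter> L D"] by (simp add: add_increasing)
    qed
    have "measure M (H \<inter> {\<omega>\<in>space M. Xn \<omega> \<in> S \<omega>}) \<le> (\<Sum>D\<in>r. c * measure M (H \<inter> L D) + measure M (H \<inter> Bd \<inter> L D))"
      unfolding m1 by (intro sum_mono each)
    also have "\<dots> = c * measure M H + measure M (H \<inter> Bd)"
      unfolding m2 m3 by (simp add: sum.distrib sum_distrib_left)
    finally show ?thesis unfolding Bd_def .
  qed

  let ?\<Phi> = "\<lambda>\<omega>. (\<omega>, Xn \<omega>)"
  have \<Phi>m: "?\<Phi> \<in> measurable M (F \<Otimes>\<^sub>M borel)"
    by (rule measurable_Pair[OF idm Xm])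
  define N1 where "N1 = distr M (F \<Otimes>\<^sub>M borel) ?\<Phi>"
  define N2 where "N2 = restr_to_subalg M F \<Otimes>\<^sub>M \<nu>"
  have fR: "finite_measure (restr_to_subalg M F)"
    using finite_measure_restr_to_subalg[OF sub] emeasure_finite by (auto simp: infinity_ennreal_def intro: finite_measureI)
  have fN1: "finite_measure N1" unfolding N1_def
    using prob_space_distr[OF \<Phi>m] unfolding prob_space_def by blast
  have fN2: "finite_measure N2" unfolding N2_def by (rule finite_measure_pair_measure[OF fnu fR])
  have sN1: "sets N1 = sets (F \<Otimes>\<^sub>M borel)" unfolding N1_def by simp
  have sN2: "sets N2 = sets (F \<Otimes>\<^sub>M borel)" unfolding N2_def
    by (rule sets_pair_measure_cong[OF sets_restr_to_subalg[OF sub] snu])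
  have sec: "Pair \<omega> -` E \<in> sets \<nu>" if "E \<in> sets (F \<Otimes>\<^sub>M borel)" for E \<omega>
    using sets_Pair1[OF that] snu by simp
  have step3: "measure M (H \<inter> {\<omega>\<in>space M. (\<omega>, Xn \<omega>) \<in> Q}) \<le> c * measure M H"
    if g: "\<gamma> > 0" and H: "H \<in> sets F" and HG: "\<And>\<omega>. \<omega> \<in> H \<Longrightarrow> measure \<nu> (Pair \<omega> -` Q) \<le> d - \<gamma>" for \<gamma> H
  proof (rule field_le_epsilon)
    fix e :: real assume e: "e > 0"
    define \<tau> where "\<tau> = e * \<gamma> / (\<gamma> + 1)"
    have tau: "\<tau> > 0" using e g by (simp add: \<tau>_def)
    obtain S where S: "ssec F S" and a1: "measure N1 (sdiff Q (gr F S)) < \<tau>" and a2: "measure N2 (sdiff Q (gr F S)) < \<tau>"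
      using approx_graph[OF fN1 fN2 sN1 sN2 Q tau] by blast
    define E where "E = sdiff Q (gr F S)"
    have R: "gr F S \<in> sets (F \<Otimes>\<^sub>M borel)" by (rule ssec_gr_sets[OF S])
    have Es: "E \<in> sets (F \<Otimes>\<^sub>M borel)" unfolding E_def sdiff_def using Q R by auto
    have HM: "H \<in> sets M" using H FM by auto
    have Hsp: "H \<subseteq> space M" using sets.sets_into_space[OF HM] .
    have PE: "?\<Phi> -` E \<inter> space M \<in> sets M" using measurable_sets[OF \<Phi>m Es] .
    have mN1: "measure N1 E = measure M (?\<Phi> -` E \<inter> space M)"
      unfolding N1_def by (rule measure_distr[OF \<Phi>m Es])
    have SM: "{\<omega>\<in>space M. Xn \<omega> \<in> S \<omega>} = ?\<Phi> -` gr F S \<inter> space M" unfolding gr_def using spF by auto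
    have SMs: "{\<omega>\<in>space M. Xn \<omega> \<in> S \<omega>} \<in> sets M" unfolding SM using measurable_sets[OF \<Phi>m R] .
    have QM: "{\<omega>\<in>space M. (\<omega>, Xn \<omega>) \<in> Q} = ?\<Phi> -` Q \<inter> space M" by auto
    have incl: "H \<inter> {\<omega>\<in>space M. (\<omega>, Xn \<omega>) \<in> Q} \<subseteq> (H \<inter> {\<omega>\<in>space M. Xn \<omega> \<in> S \<omega>}) \<union> (?\<Phi> -` E \<inter> space M)"
      unfolding E_def sdiff_def gr_def using spF by auto
    define T where "T = {\<omega>\<in>space M. \<gamma> \<le> measure \<nu> (Pair \<omega> -` E)}"
    have Ef: "(\<lambda>\<omega>. emeasure \<nu> (Pair \<omega> -` E)) \<in> borel_measurable (restr_to_subalg M F)"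
      using sigma_finite_measure.measurable_emeasure_Pair[of \<nu> E "restr_to_subalg M F"]
        nu.sigma_finite_measure_axioms Es sN2 unfolding N2_def by auto
    then have EfF: "(\<lambda>\<omega>. emeasure \<nu> (Pair \<omega> -` E)) \<in> borel_measurable F"
      using measurable_cong_sets[OF sets_restr_to_subalg[OF sub] refl] by blast
    have EfM: "(\<lambda>\<omega>. emeasure \<nu> (Pair \<omega> -` E)) \<in> borel_measurable M"
      using measurable_from_subalg[OF sub EfF] .
    have TM: "T \<in> sets M"
    proof -
      have "(\<lambda>\<omega>. measure \<nu> (Pair \<omega> -` E)) \<in> borel_measurable M"
        unfolding measure_def using EfM by measurable
      then show ?thesis unfolding T_def by measurable
    qed
    have HB: "H \<inter> {\<omega>\<in>space M. d \<le> measure \<nu> (S \<omega>)} \<subseteq> T"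
    proof
      fix \<omega> assume w: "\<omega> \<in> H \<inter> {\<omega>\<in>space M. d \<le> measure \<nu> (S \<omega>)}"
      have ws: "\<omega> \<in> space M" using w by auto
      have "S \<omega> \<subseteq> (Pair \<omega> -` Q) \<union> (Pair \<omega> -` E)" unfolding E_def sdiff_def gr_def using ws spF by auto
      moreover have "S \<omega> \<in> sets \<nu>" using S ws spF snu unfolding ssec_def by auto
      moreover have "Pair \<omega> -` Q \<in> sets \<nu>" "Pair \<omega> -` E \<in> sets \<nu>" using sec Q Es by auto
      ultimately have "measure \<nu> (S \<omega>) \<le> measure \<nu> (Pair \<omega> -` Q) + measure \<nu> (Pair \<omega> -` E)"
        by (meson nu.finite_measure_mono nu.fm_subadd order_trans sets.Un)
      then show "\<omega> \<in> T" using w HG[of \<omega>] unfolding T_def by auto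
    qed
    have "ennreal \<gamma> * emeasure M T = (\<integral>\<^sup>+\<omega>. ennreal \<gamma> * indicator T \<omega> \<partial>M)"
      using TM by (simp add: nn_integral_cmult_indicator)
    also have "\<dots> \<le> (\<integral>\<^sup>+\<omega>. emeasure \<nu> (Pair \<omega> -` E) \<partial>M)"
    proof (rule nn_integral_mono)
      fix \<omega> assume "\<omega> \<in> space M"
      show "ennreal \<gamma> * indicator T \<omega> \<le> emeasure \<nu> (Pair \<omega> -` E)"
        unfolding T_def by (auto simp: indicator_def nu.emeasure_eq_measure)
    qed
    also have "\<dots> = (\<integral>\<^sup>+\<omega>. emeasure \<nu> (Pair \<omega> -` E) \<partial>restr_to_subalg M F)"
      by (rule nn_integral_subalgebra2[OF sub EfF, symmetric])
    also have "\<dots> = emeasure N2 E"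
      unfolding N2_def using nu.emeasure_pair_measure_alt[of E "restr_to_subalg M F"] Es sN2 N2_def by auto
    finally have "ennreal \<gamma> * emeasure M T \<le> emeasure N2 E" .
    then have "ennreal (\<gamma> * measure M T) \<le> ennreal (measure N2 E)"
      using g by (simp add: emeasure_eq_measure finite_measure.emeasure_eq_measure[OF fN2] ennreal_mult)
    then have gT: "\<gamma> * measure M T \<le> measure N2 E" by (simp add: ennreal_le_iff[OF measure_nonneg])
    have mT: "measure M T \<le> \<tau> / \<gamma>" using gT a2 g unfolding E_def by (simp add: field_simps)
    have "measure M (H \<inter> {\<omega>\<in>space M. (\<omega>, Xn \<omega>) \<in> Q}) \<le> measure M ((H \<inter> {\<omega>\<in>space M. Xn \<omega> \<in> S \<omega>}) \<union> (?\<Phi> -` E \<inter> space M))"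
      using incl HM SMs PE by (intro finite_measure_mono) auto
    also have "\<dots> \<le> measure M (H \<inter> {\<omega>\<in>space M. Xn \<omega> \<in> S \<omega>}) + measure M (?\<Phi> -` E \<inter> space M)"
      using HM SMs PE by (intro fm_subadd) auto
    also have "\<dots> \<le> c * measure M H + measure M (H \<inter> {\<omega>\<in>space M. d \<le> measure \<nu> (S \<omega>)}) + measure N1 E"
      using step2[OF H S] mN1 by simp
    also have "measure M (H \<inter> {\<omega>\<in>space M. d \<le> measure \<nu> (S \<omega>)}) \<le> measure M T"
      using HB TM by (intro finite_measure_mono) auto
    also have "measure N1 E \<le> \<tau>" using a1 unfolding E_def by simp
    finally have X: "measure M (H \<inter> {\<omega>\<in>space M. (\<omega>, Xn \<omega>) \<in> Q}) \<le> c * measure M H + \<tau> / \<gamma> + \<tau>"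
      using mT by simp
    have "\<tau> / \<gamma> + \<tau> = e"
    proof -
      have g1: "\<gamma> + 1 \<noteq> 0" "\<gamma> \<noteq> 0" using g by auto
      have "\<tau> / \<gamma> = e / (\<gamma> + 1)" unfolding \<tau>_def using g1 by simp
      moreover have "e / (\<gamma> + 1) + e * \<gamma> / (\<gamma> + 1) = e"
      proof -
        have "e / (\<gamma> + 1) + e * \<gamma> / (\<gamma> + 1) = (e * (\<gamma> + 1)) / (\<gamma> + 1)"
          by (simp only: add_divide_distrib[symmetric] distrib_left mult_1_right add.commute)
        also have "\<dots> = e" using g1 by simp
        finally show ?thesis .
      qed
      ultimately show ?thesis unfolding \<tau>_def by simp
    qed
    then show "measure M (H \<inter> {\<omega>\<in>space M. (\<omega>, Xn \<omega>) \<in> Q}) \<le> c * measure M H + e" using X by linarith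
  qed
  let ?Z = "\<lambda>\<omega>. indicator Q (\<omega>, Xn \<omega>) :: real"
  let ?p = "real_cond_exp M F ?Z"
  have Zm: "?Z \<in> borel_measurable M"
    using measurable_compose[OF \<Phi>m borel_measurable_indicator[OF Q]] by simp
  have QFnu: "Q \<in> sets (F \<Otimes>\<^sub>M \<nu>)" using Q sets_pair_measure_cong[OF refl snu, of F] by simp
  have Qf0: "(\<lambda>\<omega>. emeasure \<nu> (Pair \<omega> -` Q)) \<in> borel_measurable F"
    by (rule sigma_finite_measure.measurable_emeasure_Pair[OF nu.sigma_finite_measure_axioms QFnu])
  have Qf: "(\<lambda>\<omega>. measure \<nu> (Pair \<omega> -` Q)) \<in> borel_measurable F"
    unfolding measure_def using Qf0 by measurable
  define G where "G m = {\<omega>\<in>space M. measure \<nu> (Pair \<omega> -` Q) \<le> d - 1 / real (Suc m)}" for m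
  define H where "H m = G m \<inter> {\<omega>\<in>space M. c < ?p \<omega>}" for m
  have HF: "H m \<in> sets F" for m
  proof -
    have "{\<omega>\<in>space F. measure \<nu> (Pair \<omega> -` Q) \<le> d - 1 / real (Suc m)} \<in> sets F"
      using Qf by measurable
    moreover have "{\<omega>\<in>space F. c < ?p \<omega>} \<in> sets F" by measurable
    ultimately show ?thesis unfolding H_def G_def spF by auto
  qed
  have AEH: "AE \<omega> in M. \<omega> \<notin> H m" for m
  proof -
    have HM: "H m \<in> sets M" using HF FM by auto
    have Hm: "indicator (H m) \<in> borel_measurable F" using HF by simp
    have HMm: "(indicator (H m) :: 'b \<Rightarrow> real) \<in> borel_measurable M" using HM by simp
    have int: "integrable M (\<lambda>\<omega>. indicator (H m) \<omega> * ?Z \<omega>)"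
      by (rule integrable_const_bound[where B=1]) (use borel_measurable_times[OF HMm Zm] in \<open>auto simp: indicator_def\<close>)
    have eq: "(\<integral>\<omega>. indicator (H m) \<omega> * ?p \<omega> \<partial>M) = (\<integral>\<omega>. indicator (H m) \<omega> * ?Z \<omega> \<partial>M)"
      by (rule real_cond_exp_intg(2)[OF int Hm Zm])
    have i1: "integrable M (\<lambda>\<omega>. indicator (H m) \<omega> * ?p \<omega>)"
      by (rule real_cond_exp_intg(1)[OF int Hm Zm])
    have i2: "integrable M (\<lambda>\<omega>. indicator (H m) \<omega> * c)"
      by (rule integrable_const_bound[where B="\<bar>c\<bar>"]) (use borel_measurable_times[OF HMm borel_measurable_const] in \<open>auto simp: indicator_def\<close>)
    have "(\<integral>\<omega>. indicator (H m) \<omega> * ?Z \<omega> \<partial>M) = (\<integral>\<omega>. indicator (H m \<inter> {\<omega>\<in>space M. (\<omega>, Xn \<omega>) \<in> Q}) \<omega> \<partial>M)"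
      by (rule Bochner_Integration.integral_cong) (auto simp: indicator_def)
    also have "\<dots> = measure M (H m \<inter> {\<omega>\<in>space M. (\<omega>, Xn \<omega>) \<in> Q})"
    proof -
      have "H m \<inter> {\<omega>\<in>space M. (\<omega>, Xn \<omega>) \<in> Q} \<inter> space M = H m \<inter> {\<omega>\<in>space M. (\<omega>, Xn \<omega>) \<in> Q}" by auto
      then show ?thesis by simp
    qed
    also have "\<dots> \<le> c * measure M (H m)"
      by (rule step3[of "1 / real (Suc m)"]) (use HF in \<open>auto simp: H_def G_def\<close>)
    also have "c * measure M (H m) = (\<integral>\<omega>. indicator (H m) \<omega> * c \<partial>M)"
      using HM sets.sets_into_space[OF HM] by (simp add: Int_absorb2 mult.commute)
    finally have le: "(\<integral>\<omega>. indicator (H m) \<omega> * ?p \<omega> \<partial>M) \<le> (\<integral>\<omega>. indicator (H m) \<omega> * c \<partial>M)"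
      using eq by simp
    let ?f = "\<lambda>\<omega>. indicator (H m) \<omega> * ?p \<omega> - indicator (H m) \<omega> * c"
    have fi: "integrable M ?f" using i1 i2 by auto
    have fnn: "AE \<omega> in M. 0 \<le> ?f \<omega>" by (auto simp: H_def indicator_def)
    have "integral\<^sup>L M ?f \<le> 0" using le i1 i2 by simp
    moreover have "integral\<^sup>L M ?f \<ge> 0" using fnn by (rule integral_nonneg_AE)
    ultimately have "integral\<^sup>L M ?f = 0" by simp
    then have "AE \<omega> in M. ?f \<omega> = 0" using integral_nonneg_eq_0_iff_AE[OF fi fnn] by simp
    then show ?thesis by eventually_elim (auto simp: H_def indicator_def)
  qed
  have "AE \<omega> in M. \<forall>m. \<omega> \<notin> H m" using AEH by (simp add: AE_all_countable)
  then show ?thesis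
  proof (rule AE_mp, intro AE_I2 impI)
    fix \<omega> assume w: "\<omega> \<in> space M" and nH: "\<forall>m. \<omega> \<notin> H m"
    show "?p \<omega> \<le> c"
    proof (rule ccontr)
      assume "\<not> ?p \<omega> \<le> c"
      then have cp: "c < ?p \<omega>" by simp
      have "0 < d - measure \<nu> (Pair \<omega> -` Q)" using Qs[OF w] by simp
      then obtain n :: nat where n: "n > 0" "inverse (real n) < d - measure \<nu> (Pair \<omega> -` Q)"
        using ex_inverse_of_nat_less by blast
      then have "\<omega> \<in> H (n - 1)" using w cp unfolding H_def G_def
        by (auto simp: inverse_eq_divide)
      then show False using nH by blast
    qed
  qed
qed

lemma sum_min_bound:
  fixes z w :: "nat \<Rightarrow> real"
  assumes "\<And>n. 0 \<le> z n" "\<And>n. w n \<le> 1" "\<And>n. n \<ge> n0 \<Longrightarrow> w n = z n"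
  shows "(\<Sum>n=1..N. w n) \<le> (\<Sum>n=1..N. z n) + real (min N n0)"
proof (induction N)
  case 0
  then show ?case by simp
next
  case (Suc N)
  show ?case
  proof (cases "Suc N \<ge> n0")
    case True
    then have "min (Suc N) n0 \<ge> min N n0" by simp
    then show ?thesis using Suc.IH assms(3)[OF True] by (simp add: sum.cl_ivl_Suc)
  next
    case False
    then have "real (min (Suc N) n0) = real (min N n0) + 1" by simp
    then show ?thesis using Suc.IH assms(1)[of "Suc N"] assms(2)[of "Suc N"] by (simp add: sum.cl_ivl_Suc)
  qed
qed

lemma sum_split_bound:
  fixes z :: "nat \<Rightarrow> real"
  assumes "\<And>n. z n \<le> 1" and "m \<le> N"
  shows "(\<Sum>n=1..N. z n) \<le> (\<Sum>n=1..m. z n) + real (N - m)"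
proof -
  have "(\<Sum>n=1..N. z n) = (\<Sum>n=1..m. z n) + (\<Sum>n=m+1..m+(N-m). z n)"
    using sum.ub_add_nat[of 1 m z "N - m"] assms(2) by simp
  also have "(\<Sum>n=m+1..m+(N-m). z n) \<le> of_nat (card {m+1..m+(N-m)}) * 1"
    by (rule sum_bounded_above) (use assms(1) in auto)
  finally show ?thesis by simp
qed

lemma det:
  fixes z w qq s :: "nat \<Rightarrow> real"
  assumes z0: "\<And>n. 0 \<le> z n" and z1: "\<And>n. z n \<le> 1" and w1: "\<And>n. w n \<le> 1"
    and qc: "\<And>n. qq n \<le> c" and c0: "c \<ge> 0"
    and zs: "\<And>N. (\<Sum>n=1..N. z n) = (\<Sum>n=1..N. qq n) + s N"
    and sb: "\<forall>j. \<exists>K. \<forall>k\<ge>K. \<bar>s ((Suc k)\<^sup>2)\<bar> < (1 / real (Suc j)) * real ((Suc k)\<^sup>2)"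
    and wz: "\<exists>n0. \<forall>n\<ge>n0. w n = z n"
  shows "limsup (\<lambda>N. ereal ((1 / real N) * (\<Sum>n=1..N. w n))) \<le> ereal c"
proof (rule ereal_le_epsilon2)
  fix e :: real assume e: "e > 0"
  obtain n0 where n0: "\<And>n. n \<ge> n0 \<Longrightarrow> w n = z n" using wz by blast
  obtain jj :: nat where jj: "jj > 0" "inverse (real jj) < e / 2" using ex_inverse_of_nat_less[of "e/2"] e by auto
  define j where "j = jj - 1"
  define \<eta> where "\<eta> = 1 / real (Suc j)"
  have eta: "\<eta> < e / 2" "\<eta> > 0" using jj unfolding \<eta>_def j_def by (auto simp: inverse_eq_divide)
  obtain K1 where K1: "\<And>k. k \<ge> K1 \<Longrightarrow> \<bar>s ((Suc k)\<^sup>2)\<bar> < \<eta> * real ((Suc k)\<^sup>2)"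
    using sb unfolding \<eta>_def by blast
  obtain K2 :: nat where K2: "2 * (2 + real n0) / e < real K2" using reals_Archimedean2 by blast
  define K0 where "K0 = max (Suc K1) (max K2 1)"
  have "eventually (\<lambda>N. (1 / real N) * (\<Sum>n=1..N. w n) \<le> c + e) sequentially"
    unfolding eventually_sequentially
  proof (intro exI[of _ "K0\<^sup>2"] allI impI)
    fix N assume N: "K0\<^sup>2 \<le> N"
    define K where "K = floor_sqrt N"
    have KK0: "K0 \<le> K" unfolding K_def using N by (rule le_floor_sqrtI)
    have KN: "K\<^sup>2 \<le> N" unfolding K_def by simp
    have NK: "N < (Suc K)\<^sup>2" unfolding K_def by (rule Suc_floor_sqrt_power2_gt)
    have K1le: "K \<ge> 1" "K \<ge> K2" "K \<ge> Suc K1" using KK0 unfolding K0_def by auto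
    obtain k where k: "K = Suc k" "k \<ge> K1" using K1le(3) by (cases K) auto
    have "1 \<le> K\<^sup>2" using K1le(1) by (simp add: one_le_power)
    then have Npos: "real N > 0" using KN by simp
    have sK: "s (K\<^sup>2) \<le> \<eta> * real (K\<^sup>2)" using K1[OF k(2)] k(1) by auto
    have qK: "(\<Sum>n=1..K\<^sup>2. qq n) \<le> real (K\<^sup>2) * c"
      using sum_bounded_above[of "{1..K\<^sup>2}" qq c] qc by simp
    have zK: "(\<Sum>n=1..K\<^sup>2. z n) \<le> (c + \<eta>) * real (K\<^sup>2)"
      using zs[of "K\<^sup>2"] sK qK by (simp add: algebra_simps)
    have zN: "(\<Sum>n=1..N. z n) \<le> (\<Sum>n=1..K\<^sup>2. z n) + real (N - K\<^sup>2)"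
      by (rule sum_split_bound[OF z1 KN])
    have NK2: "real (N - K\<^sup>2) \<le> 2 * real K"
    proof -
      have "N \<le> K\<^sup>2 + 2 * K" using NK by (simp add: power2_eq_square)
      then show ?thesis by linarith
    qed
    have wN: "(\<Sum>n=1..N. w n) \<le> (\<Sum>n=1..N. z n) + real n0"
    proof -
      have "real (min N n0) \<le> real n0" by simp
      moreover have "(\<Sum>n=1..N. w n) \<le> (\<Sum>n=1..N. z n) + real (min N n0)"
        by (rule sum_min_bound) (use z0 w1 n0 in auto)
      ultimately show ?thesis by linarith
    qed
    have A: "(c + \<eta>) * real (K\<^sup>2) \<le> (c + e/2) * real N"
      using KN eta c0 by (intro mult_mono) auto
    have "2 + real n0 < e / 2 * real K2" using K2 e by (simp add: field_simps)
    also have "\<dots> \<le> e / 2 * real K" using K1le(2) e by simp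
    finally have B0: "2 + real n0 < e / 2 * real K" .
    have "2 * real K + real n0 \<le> (2 + real n0) * real K" 
    proof -
      have "real n0 * 1 \<le> real n0 * real K" using K1le(1) by (intro mult_left_mono) auto
      then show ?thesis by (simp add: algebra_simps)
    qed
    also have "\<dots> \<le> e / 2 * real K * real K" using B0 K1le(1) by (intro mult_right_mono) auto
    also have "\<dots> = e / 2 * real (K\<^sup>2)" by (simp add: power2_eq_square)
    also have "\<dots> \<le> e / 2 * real N" using KN e by simp
    finally have B: "2 * real K + real n0 \<le> e / 2 * real N" .
    have "(\<Sum>n=1..N. w n) \<le> (c + e) * real N"
      using wN zN zK NK2 A B by (simp add: algebra_simps)
    then show "(1 / real N) * (\<Sum>n=1..N. w n) \<le> c + e"
      using Npos by (simp add: field_simps)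
  qed
  then have "limsup (\<lambda>N. ereal ((1 / real N) * (\<Sum>n=1..N. w n))) \<le> ereal (c + e)"
    by (intro Limsup_bounded) (auto elim: eventually_mono)
  then show "limsup (\<lambda>N. ereal ((1 / real N) * (\<Sum>n=1..N. w n))) \<le> ereal c + ereal e" by simp
qed

lemma bdd_integrable:
  assumes "finite_measure M" "f \<in> borel_measurable M" "\<And>\<omega>. \<bar>f \<omega>\<bar> \<le> (K::real)"
  shows "integrable M f"
  by (rule finite_measure.integrable_const_bound[OF assms(1), where B=K]) (use assms in auto)

lemma alg_aux:
  fixes x y B :: real
  assumes "x > 0" "y > 0"
  shows "x * B\<^sup>2 / ((1 / y) * x)\<^sup>2 = B\<^sup>2 * y\<^sup>2 * (1 / x)"
  using assms by (simp add: field_simps power2_eq_square)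

lemma slln:
  fixes M :: "'b measure" and F :: "nat \<Rightarrow> 'b measure" and Z W :: "nat \<Rightarrow> 'b \<Rightarrow> real"
  assumes P: "prob_space M"
    and sub: "\<And>k. subalgebra M (F k)" and fmono: "\<And>k. sets (F k) \<subseteq> sets (F (Suc k))"
    and Zm: "\<And>k. Z k \<in> borel_measurable (F (Suc k))"
    and Z0: "\<And>k \<omega>. 0 \<le> Z k \<omega>" and Z1: "\<And>k \<omega>. Z k \<omega> \<le> 1"
    and W1: "\<And>k \<omega>. W k \<omega> \<le> 1"
    and c0: "c \<ge> 0"
    and pc: "\<And>k. AE \<omega> in M. real_cond_exp M (F k) (Z k) \<omega> \<le> c"
    and WZ: "AE \<omega> in M. \<exists>n0. \<forall>n\<ge>n0. W n \<omega> = Z n \<omega>"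
  shows "AE \<omega> in M. limsup (\<lambda>N. ereal ((1 / real N) * (\<Sum>n=1..N. W n \<omega>))) \<le> ereal c"
proof -
  interpret prob_space M by fact
  have fm: "finite_measure M" by (rule finite_measure_axioms)
  have spF: "space (F k) = space M" and sF: "sets (F k) \<subseteq> sets M" for k
    using sub[of k] unfolding subalgebra_def by auto
  have sfs: "sigma_finite_subalgebra M (F k)" for k
    by (intro finite_measure_subalgebra_is_sigma_finite finite_measure_subalgebra.intro
        finite_measure_axioms finite_measure_subalgebra_axioms.intro sub)
  have Fle: "k \<le> m \<Longrightarrow> sets (F k) \<subseteq> sets (F m)" for k m
    using lift_Suc_mono_le[of "\<lambda>k. sets (F k)", OF fmono] by blast
  have lift: "f \<in> borel_measurable (F m)" if "f \<in> borel_measurable (F k)" "k \<le> m" for f :: "'b \<Rightarrow> real" and k m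
  proof -
    have "subalgebra (F m) (F k)" unfolding subalgebra_def using spF Fle[OF that(2)] by auto
    then show ?thesis using measurable_from_subalg that(1) by blast
  qed
  have toM: "f \<in> borel_measurable M" if "f \<in> borel_measurable (F k)" for f :: "'b \<Rightarrow> real" and k
    using measurable_from_subalg[OF sub that] .
  define p where "p k = real_cond_exp M (F k) (Z k)" for k
  define q where "q k \<omega> = max 0 (min c (p k \<omega>))" for k \<omega>
  define Y where "Y k \<omega> = Z k \<omega> - q k \<omega>" for k \<omega>
  define B where "B = 1 + c"
  have pm: "p k \<in> borel_measurable (F k)" for k
    unfolding p_def by (rule borel_measurable_cond_exp)
  have qm: "q k \<in> borel_measurable (F k)" for k
    unfolding q_def using pm[of k] by measurable
  have q0: "0 \<le> q k \<omega>" and qc: "q k \<omega> \<le> c" for k \<omega> unfolding q_def using c0 by auto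
  have ZM: "Z k \<in> borel_measurable M" for k using toM[OF Zm] .
  have Zint: "integrable M (Z k)" for k
    by (rule bdd_integrable[OF fm ZM, where K=1]) (use Z0 Z1 in \<open>auto simp: abs_le_iff intro: order_trans\<close>)
  have qp: "AE \<omega> in M. q k \<omega> = p k \<omega>" for k
  proof -
    have "AE \<omega> in M. 0 \<le> p k \<omega>" unfolding p_def
      by (rule sigma_finite_subalgebra.real_cond_exp_pos[OF sfs]) (use Z0 ZM in auto)
    then show ?thesis using pc[of k] unfolding p_def q_def by eventually_elim auto
  qed
  have Ym: "Y k \<in> borel_measurable (F (Suc k))" for k
    unfolding Y_def using Zm[of k] lift[OF qm, of k "Suc k"] by measurable
  have Yb: "\<bar>Y k \<omega>\<bar> \<le> B" for k \<omega>
    using Z0[of k \<omega>] Z1[of k \<omega>] q0[of k \<omega>] qc[of k \<omega>] unfolding Y_def B_def by auto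
  have B0: "B \<ge> 1" unfolding B_def using c0 by simp
  have orth: "(\<integral>\<omega>. f \<omega> * Y k \<omega> \<partial>M) = 0"
    if fF: "f \<in> borel_measurable (F k)" and fb: "\<And>\<omega>. \<bar>f \<omega>\<bar> \<le> K" for f K k
  proof -
    have fM: "f \<in> borel_measurable M" using toM[OF fF] .
    have K0: "K \<ge> 0" using fb[of undefined] by simp
    have ifZ: "integrable M (\<lambda>\<omega>. f \<omega> * Z k \<omega>)"
    proof (rule bdd_integrable[OF fm _, where K=K])
      show "(\<lambda>\<omega>. f \<omega> * Z k \<omega>) \<in> borel_measurable M" using fM ZM by measurable
      fix \<omega> have "\<bar>f \<omega> * Z k \<omega>\<bar> \<le> K * 1"
        unfolding abs_mult using fb[of \<omega>] Z0[of k \<omega>] Z1[of k \<omega>] K0 by (intro mult_mono) auto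
      then show "\<bar>f \<omega> * Z k \<omega>\<bar> \<le> K" by simp
    qed
    have ifq: "integrable M (\<lambda>\<omega>. f \<omega> * q k \<omega>)"
    proof (rule bdd_integrable[OF fm _, where K="K * c"])
      show "(\<lambda>\<omega>. f \<omega> * q k \<omega>) \<in> borel_measurable M" using fM toM[OF qm] by measurable
      fix \<omega> show "\<bar>f \<omega> * q k \<omega>\<bar> \<le> K * c"
        unfolding abs_mult using fb[of \<omega>] q0[of k \<omega>] qc[of k \<omega>] K0 by (intro mult_mono) auto
    qed
    have e1: "(\<integral>\<omega>. f \<omega> * p k \<omega> \<partial>M) = (\<integral>\<omega>. f \<omega> * Z k \<omega> \<partial>M)"
      unfolding p_def by (rule sigma_finite_subalgebra.real_cond_exp_intg(2)[OF sfs ifZ fF ZM])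
    have e2: "(\<integral>\<omega>. f \<omega> * q k \<omega> \<partial>M) = (\<integral>\<omega>. f \<omega> * p k \<omega> \<partial>M)"
      by (rule integral_cong_AE) (use fM toM[OF qm] toM[OF pm] qp[of k] in \<open>auto elim: eventually_mono\<close>)
    have "(\<integral>\<omega>. f \<omega> * Y k \<omega> \<partial>M) = (\<integral>\<omega>. f \<omega> * Z k \<omega> - f \<omega> * q k \<omega> \<partial>M)"
      unfolding Y_def by (simp add: algebra_simps)
    also have "\<dots> = (\<integral>\<omega>. f \<omega> * Z k \<omega> \<partial>M) - (\<integral>\<omega>. f \<omega> * q k \<omega> \<partial>M)"
      by (rule Bochner_Integration.integral_diff[OF ifZ ifq])
    finally show ?thesis using e1 e2 by simp
  qed
  define S where "S N \<omega> = (\<Sum>n=1..N. Y n \<omega>)" for N \<omega>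
  have Sm: "S N \<in> borel_measurable (F (Suc N))" for N
    unfolding S_def by (intro borel_measurable_sum lift[OF Ym]) auto
  have SM: "S N \<in> borel_measurable M" for N using toM[OF Sm] .
  have YM: "Y k \<in> borel_measurable M" for k using toM[OF Ym] .
  have Sb: "\<bar>S N \<omega>\<bar> \<le> real N * B" for N \<omega>
  proof -
    have "\<bar>S N \<omega>\<bar> \<le> (\<Sum>n=1..N. \<bar>Y n \<omega>\<bar>)" unfolding S_def by (rule sum_abs)
    also have "\<dots> \<le> of_nat (card {1..N}) * B" by (rule sum_bounded_above) (use Yb in auto)
    finally show ?thesis by simp
  qed
  have mom: "(\<integral>\<omega>. (S N \<omega>)\<^sup>2 \<partial>M) \<le> real N * B\<^sup>2" for N
  proof (induction N)
    case 0
    then show ?case by (simp add: S_def)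
  next
    case (Suc N)
    have SS: "S (Suc N) \<omega> = S N \<omega> + Y (Suc N) \<omega>" for \<omega> unfolding S_def by (simp add: sum.cl_ivl_Suc)
    have i1: "integrable M (\<lambda>\<omega>. (S N \<omega>)\<^sup>2)"
    proof (rule bdd_integrable[OF fm, where K="(real N * B)\<^sup>2"])
      show "(\<lambda>\<omega>. (S N \<omega>)\<^sup>2) \<in> borel_measurable M" using SM by measurable
      fix \<omega> show "\<bar>(S N \<omega>)\<^sup>2\<bar> \<le> (real N * B)\<^sup>2"
        using power_mono[OF Sb[of N \<omega>] abs_ge_zero, of 2] by simp
    qed
    have i2: "integrable M (\<lambda>\<omega>. 2 * (S N \<omega> * Y (Suc N) \<omega>))"
    proof (rule bdd_integrable[OF fm, where K="2 * (real N * B * B)"])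
      show "(\<lambda>\<omega>. 2 * (S N \<omega> * Y (Suc N) \<omega>)) \<in> borel_measurable M" using SM YM by measurable
      fix \<omega> have "\<bar>S N \<omega> * Y (Suc N) \<omega>\<bar> \<le> real N * B * B"
        unfolding abs_mult using Sb[of N \<omega>] Yb[of "Suc N" \<omega>] by (intro mult_mono) auto
      then show "\<bar>2 * (S N \<omega> * Y (Suc N) \<omega>)\<bar> \<le> 2 * (real N * B * B)" by simp
    qed
    have i3: "integrable M (\<lambda>\<omega>. (Y (Suc N) \<omega>)\<^sup>2)"
    proof (rule bdd_integrable[OF fm, where K="B\<^sup>2"])
      show "(\<lambda>\<omega>. (Y (Suc N) \<omega>)\<^sup>2) \<in> borel_measurable M" using YM by measurable
      fix \<omega> show "\<bar>(Y (Suc N) \<omega>)\<^sup>2\<bar> \<le> B\<^sup>2"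
        using power_mono[OF Yb[of "Suc N" \<omega>] abs_ge_zero, of 2] by simp
    qed
    have o: "(\<integral>\<omega>. S N \<omega> * Y (Suc N) \<omega> \<partial>M) = 0"
      by (rule orth[OF Sm Sb])
    have y2: "(\<integral>\<omega>. (Y (Suc N) \<omega>)\<^sup>2 \<partial>M) \<le> (\<integral>\<omega>. B\<^sup>2 \<partial>M)"
      by (rule integral_mono[OF i3]) (use power_mono[OF Yb[of "Suc N"] abs_ge_zero, where n=2] in auto)
    have "(\<integral>\<omega>. (S (Suc N) \<omega>)\<^sup>2 \<partial>M) = (\<integral>\<omega>. (S N \<omega>)\<^sup>2 + 2 * (S N \<omega> * Y (Suc N) \<omega>) + (Y (Suc N) \<omega>)\<^sup>2 \<partial>M)"
      unfolding SS by (simp add: power2_eq_square algebra_simps)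
    also have "\<dots> = (\<integral>\<omega>. (S N \<omega>)\<^sup>2 \<partial>M) + (\<integral>\<omega>. 2 * (S N \<omega> * Y (Suc N) \<omega>) \<partial>M) + (\<integral>\<omega>. (Y (Suc N) \<omega>)\<^sup>2 \<partial>M)"
      using i1 i2 i3 by simp
    also have "(\<integral>\<omega>. 2 * (S N \<omega> * Y (Suc N) \<omega>) \<partial>M) = 0" using o by simp
    finally show ?case using Suc.IH y2 prob_space by (simp add: algebra_simps)
  qed
  define Ev where "Ev j k = {\<omega>\<in>space M. (1 / real (Suc j)) * real ((Suc k)\<^sup>2) \<le> \<bar>S ((Suc k)\<^sup>2) \<omega>\<bar>}" for j k
  have EvM: "Ev j k \<in> sets M" for j k unfolding Ev_def using SM by measurable
  have EvB: "measure M (Ev j k) \<le> B\<^sup>2 * (real (Suc j))\<^sup>2 * (1 / (real (Suc k))\<^sup>2)" for j k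
  proof -
    define N where "N = (Suc k)\<^sup>2"
    define a where "a = (1 / real (Suc j)) * real N"
    have a0: "a > 0" unfolding a_def N_def by simp
    have iS: "integrable M (\<lambda>\<omega>. (S N \<omega>)\<^sup>2)"
    proof (rule bdd_integrable[OF fm, where K="(real N * B)\<^sup>2"])
      show "(\<lambda>\<omega>. (S N \<omega>)\<^sup>2) \<in> borel_measurable M" using SM by measurable
      fix \<omega> show "\<bar>(S N \<omega>)\<^sup>2\<bar> \<le> (real N * B)\<^sup>2"
        using power_mono[OF Sb[of N \<omega>] abs_ge_zero, of 2] by simp
    qed
    have "Ev j k = {\<omega>\<in>space M. (S N \<omega>)\<^sup>2 \<ge> a\<^sup>2}"
    proof -
      have sq: "a \<le> \<bar>t\<bar> \<longleftrightarrow> a\<^sup>2 \<le> t\<^sup>2" for t using abs_le_square_iff[of a t] a0 by simp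
      show ?thesis unfolding Ev_def N_def[symmetric] a_def[symmetric] using sq by auto
    qed
    then have "measure M (Ev j k) \<le> (\<integral>\<omega>. (S N \<omega>)\<^sup>2 \<partial>M) / a\<^sup>2"
      using integral_Markov_inequality_measure[OF iS sets.top, of "a\<^sup>2"] a0 by simp
    also have "\<dots> \<le> real N * B\<^sup>2 / a\<^sup>2" using mom[of N] a0 by (simp add: divide_right_mono)
    also have "\<dots> = B\<^sup>2 * (real (Suc j))\<^sup>2 * (1 / (real (Suc k))\<^sup>2)"
    proof -
      have "real N * B\<^sup>2 / a\<^sup>2 = B\<^sup>2 * (real (Suc j))\<^sup>2 * (1 / real N)"
        unfolding a_def by (rule alg_aux) (auto simp: N_def)
      then show ?thesis by (simp add: N_def)
    qed
    finally show ?thesis .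
  qed
  have summ: "summable (\<lambda>k. 1 / (real (Suc k))\<^sup>2)"
    using inverse_power_summable[of 2] summable_Suc_iff[of "\<lambda>n. inverse (real n ^ 2)"]
    by (simp add: inverse_eq_divide)
  have BC: "AE \<omega> in M. eventually (\<lambda>k. \<omega> \<in> space M - Ev j k) sequentially" for j
  proof (rule borel_cantelli_AE1[OF EvM])
    show "emeasure M (Ev j k) < \<infinity>" for k by (simp add: emeasure_eq_measure)
    show "summable (\<lambda>k. measure M (Ev j k))"
      by (rule summable_comparison_test'[OF summable_mult[OF summ, of "B\<^sup>2 * (real (Suc j))\<^sup>2"]])
         (use EvB in auto)
  qed
  have "AE \<omega> in M. \<forall>j. eventually (\<lambda>k. \<omega> \<in> space M - Ev j k) sequentially"
    using BC by (simp add: AE_all_countable)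
  with WZ show ?thesis
  proof (eventually_elim)
    case (elim \<omega>)
    show ?case
    proof (cases "\<omega> \<in> space M")
      case False
      then show ?thesis using elim by auto
    next
      case True
      show ?thesis
      proof (rule det[where z="\<lambda>n. Z n \<omega>" and qq="\<lambda>n. q n \<omega>" and s="\<lambda>N. S N \<omega>"])
        show "\<And>n. 0 \<le> Z n \<omega>" "\<And>n. Z n \<omega> \<le> 1" "\<And>n. W n \<omega> \<le> 1" "\<And>n. q n \<omega> \<le> c" "c \<ge> 0"
          using Z0 Z1 W1 qc c0 by auto
        show "(\<Sum>n=1..N. Z n \<omega>) = (\<Sum>n=1..N. q n \<omega>) + S N \<omega>" for N
          unfolding S_def Y_def by (simp add: sum_subtractf)
        show "\<exists>n0. \<forall>n\<ge>n0. W n \<omega> = Z n \<omega>" using elim by blast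
        show "\<forall>j. \<exists>K. \<forall>k\<ge>K. \<bar>S ((Suc k)\<^sup>2) \<omega>\<bar> < 1 / real (Suc j) * real ((Suc k)\<^sup>2)"
        proof
          fix j
          obtain K where "\<forall>k\<ge>K. \<omega> \<in> space M - Ev j k" using elim(2) unfolding eventually_sequentially by blast
          then show "\<exists>K. \<forall>k\<ge>K. \<bar>S ((Suc k)\<^sup>2) \<omega>\<bar> < 1 / real (Suc j) * real ((Suc k)\<^sup>2)"
            using True unfolding Ev_def by (auto simp: not_le)
        qed
      qed
    qed
  qed
qed

theorem lemma1:
  fixes M :: "'b measure" and \<nu> :: "'a::{metric_space, second_countable_topology} measure"
    and X :: "nat \<Rightarrow> 'b \<Rightarrow> 'a" and A :: "nat \<Rightarrow> 'b \<Rightarrow> 'a set"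
    and \<epsilon> :: "real \<Rightarrow> real" and \<delta> :: real
  assumes "prob_space M"
    and "finite_measure \<nu>" and "sets \<nu> = sets borel"
    and "\<And>n. X n \<in> borel_measurable M"
    and "unif_dom_rate M X \<nu> \<epsilon>"
    and "\<And>n. {(\<omega>, x). \<omega> \<in> space M \<and> x \<in> A n \<omega>} \<in> sets (nat_past M X n \<Otimes>\<^sub>M borel)"
    and "AE \<omega> in M. limsup (\<lambda>n. emeasure \<nu> (A n \<omega>)) < ennreal \<delta>"
  shows "AE \<omega> in M. limsup (\<lambda>N. ereal ((1 / real N) * (\<Sum>n=1..N. indicator (A n \<omega>) (X n \<omega>))))
            \<le> ereal (\<epsilon> \<delta>)"
proof -
  note P = assms(1) and fnu = assms(2) and snu = assms(3) and Xm = assms(4)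
    and ud = assms(5) and Qm = assms(6) and ls = assms(7)
  interpret prob_space M by fact
  interpret nu: finite_measure \<nu> by fact
  define F where "F k = nat_past M X k" for k
  define gens where "gens k = {X i -` B \<inter> space M | i B. i < k \<and> B \<in> sets (borel :: 'a measure)}" for k
  have gP: "gens k \<subseteq> Pow (space M)" for k unfolding gens_def by auto
  have gM: "gens k \<subseteq> sets M" for k unfolding gens_def using Xm by (auto intro: measurable_sets)
  have spF: "space (F k) = space M" for k
    unfolding F_def nat_past_def gens_def[symmetric] by (simp add: space_measure_of_conv)
  have sF: "sets (F k) = sigma_sets (space M) (gens k)" for k
    unfolding F_def nat_past_def gens_def[symmetric] using gP by (simp add: sets_measure_of)
  have sub: "subalgebra M (F k)" for k
    unfolding subalgebra_def spF sF using sets.sigma_sets_subset[OF gM] by auto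
  have fmono: "sets (F k) \<subseteq> sets (F (Suc k))" for k
    unfolding sF by (rule sigma_sets_subseteq) (force simp: gens_def)
  have sub2: "subalgebra (F (Suc k)) (F k)" for k unfolding subalgebra_def using spF fmono by auto
  have XF: "X k \<in> borel_measurable (F (Suc k))" for k
  proof (rule measurableI)
    fix B :: "'a set" assume "B \<in> sets borel"
    then have "X k -` B \<inter> space M \<in> gens (Suc k)" unfolding gens_def by blast
    then show "X k -` B \<inter> space (F (Suc k)) \<in> sets (F (Suc k))" unfolding spF sF by auto
  qed auto
  have sfs: "sigma_finite_subalgebra M (F k)" for k
    by (intro finite_measure_subalgebra_is_sigma_finite finite_measure_subalgebra.intro
        finite_measure_axioms finite_measure_subalgebra_axioms.intro sub)
  define c where "c = \<epsilon> \<delta>"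
  have "AE \<omega> in M. 0 < \<delta>" using ls by eventually_elim (metis ennreal_less_zero_iff le_less_trans zero_le)
  then have d0: "\<delta> > 0" by simp
  have hr: "AE \<omega> in M. (\<Squnion>n. cond_prob M X n B \<omega>) < c" if "B \<in> sets borel" "measure \<nu> B < \<delta>" for B
    using ud d0 that snu unfolding unif_dom_rate_def c_def by auto
  have cp1: "AE \<omega> in M. cond_prob M X k B \<omega> \<le> 1" if B: "B \<in> sets borel" for k B
  proof -
    have fm: "(\<lambda>\<omega>. indicator B (X k \<omega>) :: real) \<in> borel_measurable M"
      by (rule measurable_compose[OF Xm[of k] borel_measurable_indicator[OF B]])
    have "integrable M (\<lambda>\<omega>. indicator B (X k \<omega>) :: real)"
      by (rule bdd_integrable[OF finite_measure_axioms fm, where K=1]) (auto simp: indicator_def)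
    then show ?thesis unfolding cond_prob_def
      by (intro sigma_finite_subalgebra.real_cond_exp_le_c[OF sfs[unfolded F_def]]) (auto simp: indicator_def)
  qed
  have hypk: "AE \<omega> in M. real_cond_exp M (F k) (\<lambda>\<omega>. indicator B (X k \<omega>)) \<omega> < c"
    if B: "B \<in> sets borel" "measure \<nu> B < \<delta>" for k B
  proof -
    have "AE \<omega> in M. \<forall>n. cond_prob M X n B \<omega> \<le> 1" using cp1[OF B(1)] by (simp add: AE_all_countable)
    with hr[OF B] show ?thesis
    proof eventually_elim
      case (elim \<omega>)
      have bd: "bdd_above (range (\<lambda>n. cond_prob M X n B \<omega>))" using elim by (intro bdd_aboveI2[where M=1]) auto
      have "cond_prob M X k B \<omega> \<le> (\<Squnion>n. cond_prob M X n B \<omega>)" by (rule cSUP_upper[OF UNIV_I bd])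
      then show ?case using elim unfolding cond_prob_def F_def by simp
    qed
  qed
  have c0: "c > 0"
  proof -
    have a1: "AE \<omega> in M. real_cond_exp M (F 0) (\<lambda>\<omega>. indicator {} (X 0 \<omega>)) \<omega> < c"
      by (rule hypk) (use d0 in auto)
    have a2: "AE \<omega> in M. real_cond_exp M (F 0) (\<lambda>\<omega>. 0) \<omega> = 0"
      by (rule sigma_finite_subalgebra.real_cond_exp_F_meas[OF sfs]) auto
    have "AE \<omega> in M. 0 < c" using a1 a2 by eventually_elim auto
    then show ?thesis by simp
  qed
  define Q where "Q k = {(\<omega>, x). \<omega> \<in> space M \<and> x \<in> A k \<omega>}" for k
  define L where "L k = {\<omega>\<in>space M. emeasure \<nu> (A k \<omega>) < ennreal \<delta>}" for k
  define Q' where "Q' k = Q k \<inter> (L k \<times> UNIV)" for k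
  have QF: "Q k \<in> sets (F k \<Otimes>\<^sub>M borel)" for k unfolding Q_def F_def using Qm .
  have sec: "Pair \<omega> -` Q k = A k \<omega>" if "\<omega> \<in> space M" for \<omega> k unfolding Q_def using that by auto
  have LF: "L k \<in> sets (F k)" for k
  proof -
    have QFnu: "Q k \<in> sets (F k \<Otimes>\<^sub>M \<nu>)" using QF sets_pair_measure_cong[OF refl snu, of "F k"] by simp
    have "(\<lambda>\<omega>. emeasure \<nu> (Pair \<omega> -` Q k)) \<in> borel_measurable (F k)"
      by (rule sigma_finite_measure.measurable_emeasure_Pair[OF nu.sigma_finite_measure_axioms QFnu])
    then have "{\<omega>\<in>space (F k). emeasure \<nu> (Pair \<omega> -` Q k) < ennreal \<delta>} \<in> sets (F k)" by measurable
    moreover have "{\<omega>\<in>space (F k). emeasure \<nu> (Pair \<omega> -` Q k) < ennreal \<delta>} = L k"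
      unfolding L_def spF using sec by auto
    ultimately show ?thesis by simp
  qed
  have Q'F: "Q' k \<in> sets (F k \<Otimes>\<^sub>M borel)" for k
    unfolding Q'_def using QF LF by (intro sets.Int pair_measureI) auto
  have Q's: "measure \<nu> (Pair \<omega> -` Q' k) < \<delta>" if w: "\<omega> \<in> space M" for \<omega> k
  proof (cases "\<omega> \<in> L k")
    case True
    then have "Pair \<omega> -` Q' k = A k \<omega>" unfolding Q'_def using sec[OF w] by auto
    moreover have "measure \<nu> (A k \<omega>) < \<delta>"
      using True unfolding L_def by (simp add: nu.emeasure_eq_measure ennreal_less_iff)
    ultimately show ?thesis by simp
  next
    case False
    then have "Pair \<omega> -` Q' k = {}" unfolding Q'_def by auto
    then show ?thesis using d0 by simp
  qed
  have keyk: "AE \<omega> in M. real_cond_exp M (F k) (\<lambda>\<omega>. indicator (Q' k) (\<omega>, X k \<omega>)) \<omega> \<le> c" for k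
    by (rule key[OF P sub Xm fnu snu _ hypk Q'F Q's]) (use c0 in auto)
  define Z where "Z k \<omega> = (indicator (Q' k) (\<omega>, X k \<omega>) :: real)" for k \<omega>
  have Zm: "Z k \<in> borel_measurable (F (Suc k))" for k
  proof -
    have "(\<lambda>\<omega>. \<omega>) \<in> measurable (F (Suc k)) (F k)"
      by (rule measurable_from_subalg[OF sub2 measurable_ident_sets[OF refl]])
    then have "(\<lambda>\<omega>. (\<omega>, X k \<omega>)) \<in> measurable (F (Suc k)) (F k \<Otimes>\<^sub>M borel)"
      using XF by (intro measurable_Pair) auto
    then show ?thesis unfolding Z_def
      using measurable_compose[OF _ borel_measurable_indicator[OF Q'F]] by blast
  qed
  have WZ: "AE \<omega> in M. \<exists>n0. \<forall>n\<ge>n0. indicator (A n \<omega>) (X n \<omega>) = Z n \<omega>"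
    using ls
  proof (rule AE_mp, intro AE_I2 impI)
    fix \<omega> assume w: "\<omega> \<in> space M" and l: "limsup (\<lambda>n. emeasure \<nu> (A n \<omega>)) < ennreal \<delta>"
    have "eventually (\<lambda>n. emeasure \<nu> (A n \<omega>) < ennreal \<delta>) sequentially"
      by (rule Limsup_lessD[OF l])
    then obtain n0 where n0: "\<And>n. n \<ge> n0 \<Longrightarrow> emeasure \<nu> (A n \<omega>) < ennreal \<delta>"
      unfolding eventually_sequentially by blast
    show "\<exists>n0. \<forall>n\<ge>n0. indicator (A n \<omega>) (X n \<omega>) = Z n \<omega>"
      using n0 w unfolding Z_def Q'_def Q_def L_def by (auto simp: indicator_def)
  qed
  show ?thesis unfolding c_def[symmetric]
  proof (rule slln[where F=F and Z=Z and W="\<lambda>n \<omega>. indicator (A n \<omega>) (X n \<omega>)", OF P sub fmono Zm])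
    show "0 \<le> Z k \<omega>" "Z k \<omega> \<le> 1" for k \<omega> unfolding Z_def by (auto simp: indicator_def)
    show "indicator (A k \<omega>) (X k \<omega>) \<le> (1::real)" for k \<omega> by (auto simp: indicator_def)
    show "c \<ge> 0" using c0 by simp
    show "AE \<omega> in M. real_cond_exp M (F k) (Z k) \<omega> \<le> c" for k using keyk[of k] unfolding Z_def .
    show "AE \<omega> in M. \<exists>n0. \<forall>n\<ge>n0. indicator (A n \<omega>) (X n \<omega>) = Z n \<omega>" by (rule WZ)
  qed
qed

end
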